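(* Let $n \geq 3$ and let $\Omega = \bigcap_{m=0}^q \{u_m \leq 0\} \subset \mathbb{R}^n$ be a compact convex polytope with non-empty interior satisfying the standing assumptions described in the context. Then there exists a constant $\Lambda > 1$ with the following property: whenever $x \in \Omega$ and $a_0,\dots,a_q$ are nonnegative real numbers such that $a_i = 0$ for all $0 \leq i \leq q$ with $u_i(x) \leq -2\Lambda^{-1}$, we have \[\sum_{i=0}^q a_i \leq \Lambda \, \Big| \sum_{i=0}^q a_i N_i \Big|.\]
   Context: Here $u_0,\dots,u_q$ are non-constant linear (affine) functions on $\mathbb{R}^n$ and $\Omega = \bigcap_{m=0}^q\{u_m\le 0\}$ is compact, convex, with non-empty interior. Standing assumptions: (a) for each $k$, the set $\{u_k>0\}\cap\bigcap_{m\neq k}\{u_m\le 0\}$ is non-empty; (b) the Euclidean gradient of each $u_k$ is a unit vector $N_k\in S^{n-1}$; (c) for $0\le j<k\le q$, if there exists $x\in\Omega$ with $u_j(x)=u_k(x)=0$, then $\langle N_j,N_k\rangle\le 0$. $|\cdot|$ denotes the Euclidean norm. *)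

theory Defs
  imports "HOL-Analysis.Analysis"
begin

end

theory Submission
  imports Defs
begin

theorem lemma2p3:
  fixes u :: "nat \<Rightarrow> 'a::euclidean_space \<Rightarrow> real"
    and N :: "nat \<Rightarrow> 'a" and b :: "nat \<Rightarrow> real" and q :: nat
    and \<Omega> :: "'a set"
  assumes dim: "DIM('a) \<ge> 3"
    and affine_u: "\<And>k x. k \<le> q \<Longrightarrow> u k x = N k \<bullet> x + b k"
    and unit_N: "\<And>k. k \<le> q \<Longrightarrow> norm (N k) = 1"
    and Omega_def: "\<Omega> = {x. \<forall>m\<le>q. u m x \<le> 0}"
    and compact: "compact \<Omega>" and convex: "convex \<Omega>"
    and interior: "interior \<Omega> \<noteq> {}"
    and irredundant: "\<And>k. k \<le> q \<Longrightarrow>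
        \<exists>x. u k x > 0 \<and> (\<forall>m\<le>q. m \<noteq> k \<longrightarrow> u m x \<le> 0)"
    and angle: "\<And>j k. j < k \<Longrightarrow> k \<le> q \<Longrightarrow>
        (\<exists>x\<in>\<Omega>. u j x = 0 \<and> u k x = 0) \<Longrightarrow> N j \<bullet> N k \<le> 0"
  shows "\<exists>\<Lambda>::real. \<Lambda> > 1 \<and>
     (\<forall>x\<in>\<Omega>. \<forall>a::nat \<Rightarrow> real.
        (\<forall>i\<le>q. a i \<ge> 0) \<longrightarrow>
        (\<forall>i\<le>q. u i x \<le> -2 / \<Lambda> \<longrightarrow> a i = 0) \<longrightarrow>
        (\<Sum>i\<le>q. a i) \<le> \<Lambda> * norm (\<Sum>i\<le>q. a i *\<^sub>R N i))"
proof -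
  obtain z where "z \<in> interior \<Omega>" using interior by blast
  then obtain e where e0: "e > 0" "ball z e \<subseteq> interior \<Omega>"
    using open_contains_ball_eq[OF open_interior] by metis
  hence e: "e > 0" "ball z e \<subseteq> \<Omega>" using interior_subset by auto
  define m where "m = e / 2"
  have m: "m > 0" using e by (simp add: m_def)
  have z_in: "z \<in> \<Omega>" using e by auto
  have uz: "u i z \<le> - m" if i: "i \<le> q" for i
  proof -
    have "z + m *\<^sub>R N i \<in> ball z e"
      using e unit_N[OF i] by (simp add: m_def dist_norm)
    hence "z + m *\<^sub>R N i \<in> \<Omega>" using e(2) by blast
    hence "u i (z + m *\<^sub>R N i) \<le> 0" using Omega_def i by auto
    moreover have "N i \<bullet> N i = 1" using unit_N[OF i]
      by (simp add: inner_commute norm_eq_sqrt_inner)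
    ultimately show ?thesis using affine_u[OF i]
      by (simp add: inner_add_right)
  qed
  have "\<exists>B>0. \<forall>x\<in>\<Omega>. norm x \<le> B"
    using compact_imp_bounded[OF compact] unfolding bounded_pos .
  then obtain B where B: "B > 0" "\<And>x. x \<in> \<Omega> \<Longrightarrow> norm x \<le> B" by metis
  define L where "L = 2 + 4 / m + 4 * B / m"
  have p1: "4 / m > 0" using m by simp
  have p2: "4 * B / m > 0" using m B by simp
  have L1: "L > 1" unfolding L_def using p1 p2 by linarith
  have L4: "L \<ge> 4 / m" unfolding L_def using p1 p2 by linarith
  have LB: "L \<ge> 4 * B / m" unfolding L_def using p1 p2 by linarith
  have Lpos: "L > 0" using L1 by simp
  have key: "2 / L \<le> m / 2"
  proof -
    have "4 / m \<le> L" by (rule L4)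
    hence "4 \<le> L * m" using m by (simp add: divide_le_eq)
    hence "2 * 2 \<le> L * m" by simp
    hence "2 * 2 \<le> (m / 2) * (2 * L)" by (simp add: algebra_simps)
    thus ?thesis using Lpos by (simp add: divide_le_eq mult.commute)
  qed
  show ?thesis
  proof (intro exI conjI ballI allI impI)
    show "L > 1" by (rule L1)
    fix x and a :: "nat \<Rightarrow> real"
    assume x: "x \<in> \<Omega>" and a0: "\<forall>i\<le>q. a i \<ge> 0"
      and supp: "\<forall>i\<le>q. u i x \<le> -2 / L \<longrightarrow> a i = 0"
    define S where "S = (\<Sum>i\<le>q. a i *\<^sub>R N i)"
    have each: "a i * (m / 2) \<le> - (a i * (N i \<bullet> (z - x)))" if i: "i \<le> q" for i
    proof (cases "a i = 0")
      case True then show ?thesis by simp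
    next
      case False
      hence "u i x > -2 / L" using supp i by force
      moreover have "N i \<bullet> (z - x) = u i z - u i x"
        using affine_u[OF i] by (simp add: inner_diff_right)
      ultimately have "N i \<bullet> (z - x) \<le> - (m / 2)" using uz[OF i] key by linarith
      hence "a i * (m / 2) \<le> a i * (- (N i \<bullet> (z - x)))"
        using a0 i by (intro mult_left_mono) auto
      thus ?thesis by simp
    qed
    have "(\<Sum>i\<le>q. a i) * (m / 2) = (\<Sum>i\<le>q. a i * (m / 2))"
      by (simp add: sum_distrib_right)
    also have "\<dots> \<le> (\<Sum>i\<le>q. - (a i * (N i \<bullet> (z - x))))"
      using each by (intro sum_mono) simp
    also have "\<dots> = - (S \<bullet> (z - x))"
      by (simp add: S_def inner_sum_left sum_negf)
    also have "\<dots> \<le> norm S * norm (z - x)"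
      using Cauchy_Schwarz_ineq2[of S "z - x"] by (simp add: abs_le_iff)
    also have "\<dots> \<le> norm S * (2 * B)"
    proof -
      have "norm (z - x) \<le> norm z + norm x" by (rule norm_triangle_ineq4)
      also have "\<dots> \<le> 2 * B" using B(2)[OF z_in] B(2)[OF x] by linarith
      finally show ?thesis by (simp add: mult_left_mono)
    qed
    finally have h: "(\<Sum>i\<le>q. a i) * (m / 2) \<le> norm S * (2 * B)" .
    hence "(\<Sum>i\<le>q. a i) \<le> (norm S * (2 * B)) / (m / 2)"
      using m by (simp add: le_divide_eq)
    also have "\<dots> = (4 * B / m) * norm S" by (simp add: field_simps)
    also have "\<dots> \<le> L * norm S" using LB by (intro mult_right_mono) auto
    finally show "(\<Sum>i\<le>q. a i) \<le> L * norm (\<Sum>i\<le>q. a i *\<^sub>R N i)"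
      by (simp add: S_def)
  qed
qed

end
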